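(* Let $\nu\ge2$, $\rho>0$, $\lambda_1,\dots,\lambda_\nu>0$, and let $X$ have the density proportional to $\prod_{n=1}^\nu\lambda_n^{-1/2}\phi(\lambda_n^{-1/2}x_n)$ on $\{x:x^Tx<\rho\}$ and zero elsewhere ($\phi$ the standard normal density). Let $Y_n=\lambda_n^{-1}X_n^2$. Then $E(Y_2\mid Y_1=y_1)$ is nonincreasing in $y_1$ over $0<y_1<\rho/\lambda_1$. *)

theory Defs
  imports "HOL-Probability.Probability"
begin

definition trunc_normal_dens :: "('n::finite \<Rightarrow> real) \<Rightarrow> real \<Rightarrow> real ^ 'n \<Rightarrow> real" where
  "trunc_normal_dens lam rho x =
     (if x \<bullet> x < rho
      then (\<Prod>n\<in>UNIV. inverse (sqrt (lam n)) * std_normal_density (inverse (sqrt (lam n)) * x $ n))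
      else 0)"

end

theory Submission
  imports Defs
begin

definition sdf :: "(real \<Rightarrow> real) \<Rightarrow> bool" where
  "sdf f \<longleftrightarrow> (\<forall>z w. \<bar>z\<bar> \<le> \<bar>w\<bar> \<longrightarrow> f w \<le> f z)"

definition sds :: "real set \<Rightarrow> bool" where
  "sds S \<longleftrightarrow> (\<forall>z w. z \<in> S \<longrightarrow> \<bar>w\<bar> \<le> \<bar>z\<bar> \<longrightarrow> w \<in> S)"

lemma not_bdd_UNIV: "\<not> bdd_above (abs ` (UNIV :: real set))"
proof
  assume "bdd_above (abs ` (UNIV :: real set))"
  then obtain M where "\<And>x::real. \<bar>x\<bar> \<le> M" unfolding bdd_above_def by auto
  from this[of "\<bar>M\<bar> + 1"] show False by linarith
qed

lemma sds_unbounded: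
  assumes "sds S" "\<not> bdd_above (abs ` S)"
  shows "S = UNIV"
proof -
  { fix w :: real
    from assms(2) obtain z where "z \<in> S" "\<not> \<bar>z\<bar> \<le> \<bar>w\<bar>"
      unfolding bdd_above_def by auto
    with assms(1) have "w \<in> S" unfolding sds_def by (meson linear) }
  then show ?thesis by auto
qed

lemma sds_measure:
  assumes "sds S" "S \<in> sets borel" "z0 \<in> S" "bdd_above (abs ` S)"
  shows "emeasure lborel S = ennreal (2 * Sup (abs ` S))"
proof -
  define a where "a = Sup (abs ` S)"
  have ub: "\<bar>z\<bar> \<le> a" if "z \<in> S" for z
    unfolding a_def using assms(4) that by (intro cSup_upper) auto
  have a0: "0 \<le> a" using ub[OF assms(3)] by linarith
  have sub1: "S \<subseteq> {-a..a}"
  proof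
    fix x assume "x \<in> S" with ub[of x] show "x \<in> {-a..a}" by (auto simp: abs_le_iff)
  qed
  have sub2: "{-a<..<a} \<subseteq> S"
  proof
    fix w assume "w \<in> {-a<..<a}"
    then have "\<bar>w\<bar> < a" by auto
    then obtain z where "z \<in> S" "\<bar>w\<bar> < \<bar>z\<bar>"
      unfolding a_def using assms(3,4) less_cSup_iff[of "abs ` S" "\<bar>w\<bar>"] by auto
    then show "w \<in> S" using assms(1) unfolding sds_def by auto
  qed
  have "emeasure lborel S \<le> emeasure lborel {-a..a}" using sub1 by (intro emeasure_mono) auto
  also have "\<dots> = ennreal (2 * a)" using a0 by simp
  finally have 1: "emeasure lborel S \<le> ennreal (2 * a)" .
  have "ennreal (2 * a) = emeasure lborel {-a<..<a}" using a0 by simp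
  also have "\<dots> \<le> emeasure lborel S" using sub2 assms(2) by (intro emeasure_mono) auto
  finally show ?thesis using 1 unfolding a_def by simp
qed

lemma BM_sds:
  fixes A B C :: "real set" and t :: real
  assumes sA: "sds A" and sB: "sds B" and sC: "sds C"
    and mA: "A \<in> sets borel" and mB: "B \<in> sets borel" and mC: "C \<in> sets borel"
    and A0: "0 \<in> A" and B0: "0 \<in> B" and t: "0 < t" "t < 1"
    and comb: "\<And>z w. z \<in> A \<Longrightarrow> w \<in> B \<Longrightarrow> t * z + (1 - t) * w \<in> C"
  shows "ennreal t * emeasure lborel A + ennreal (1 - t) * emeasure lborel B \<le> emeasure lborel C"
proof (cases "bdd_above (abs ` C)")
  case False
  then have "C = UNIV" using sds_unbounded[OF sC False] by blast
  then show ?thesis by simp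
next
  case bC: True
  have bA: "bdd_above (abs ` A)"
  proof (rule ccontr)
    assume "\<not> bdd_above (abs ` A)"
    then have "A = UNIV" by (rule sds_unbounded[OF sA])
    then have "C = UNIV"
    proof -
      { fix x :: real have "t * (x / t) + (1 - t) * 0 \<in> C" using comb[of "x/t" 0] B0 \<open>A = UNIV\<close> by auto
        then have "x \<in> C" using t by simp }
      then show ?thesis by auto
    qed
    then show False using bC not_bdd_UNIV by simp
  qed
  have bB: "bdd_above (abs ` B)"
  proof (rule ccontr)
    assume "\<not> bdd_above (abs ` B)"
    then have "B = UNIV" by (rule sds_unbounded[OF sB])
    then have "C = UNIV"
    proof -
      { fix x :: real have "t * 0 + (1 - t) * (x / (1 - t)) \<in> C" using comb[of 0 "x/(1-t)"] A0 \<open>B = UNIV\<close> by auto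
        then have "x \<in> C" using t by simp }
      then show ?thesis by auto
    qed
    then show False using bC not_bdd_UNIV by simp
  qed
  define a b c where "a = Sup (abs ` A)" and "b = Sup (abs ` B)" and "c = Sup (abs ` C)"
  have absA: "\<bar>z\<bar> \<in> A" if "z \<in> A" for z using sA that unfolding sds_def by auto
  have absB: "\<bar>z\<bar> \<in> B" if "z \<in> B" for z using sB that unfolding sds_def by auto
  have key: "t * \<bar>z\<bar> + (1 - t) * \<bar>w\<bar> \<le> c" if "z \<in> A" "w \<in> B" for z w
  proof -
    have "t * \<bar>z\<bar> + (1 - t) * \<bar>w\<bar> \<in> C" using comb[OF absA[OF that(1)] absB[OF that(2)]] .
    then have "\<bar>t * \<bar>z\<bar> + (1 - t) * \<bar>w\<bar>\<bar> \<le> c" unfolding c_def using bC by (intro cSup_upper) auto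
    then show ?thesis by linarith
  qed
  have k2: "t * a + (1 - t) * \<bar>w\<bar> \<le> c" if "w \<in> B" for w
  proof -
    have "a \<le> (c - (1 - t) * \<bar>w\<bar>) / t" unfolding a_def
    proof (rule cSup_least)
      show "abs ` A \<noteq> {}" using A0 by auto
      fix x assume "x \<in> abs ` A"
      then obtain z where z: "z \<in> A" "x = \<bar>z\<bar>" by auto
      have "x * t \<le> c - (1 - t) * \<bar>w\<bar>" using key[OF z(1) that] z(2) by (simp add: mult.commute)
      then show "x \<le> (c - (1 - t) * \<bar>w\<bar>) / t" by (simp add: pos_le_divide_eq[OF t(1)])
    qed
    then have "a * t \<le> c - (1 - t) * \<bar>w\<bar>" by (simp add: pos_le_divide_eq[OF t(1)])
    then show ?thesis by (simp add: mult.commute)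
  qed
  have t1: "0 < 1 - t" using t by simp
  have k3: "t * a + (1 - t) * b \<le> c"
  proof -
    have "b \<le> (c - t * a) / (1 - t)" unfolding b_def
    proof (rule cSup_least)
      show "abs ` B \<noteq> {}" using B0 by auto
      fix x assume "x \<in> abs ` B"
      then obtain w where w: "w \<in> B" "x = \<bar>w\<bar>" by auto
      have "x * (1 - t) \<le> c - t * a" using k2[OF w(1)] w(2) by (simp add: mult.commute)
      then show "x \<le> (c - t * a) / (1 - t)" by (simp add: pos_le_divide_eq[OF t1])
    qed
    then have "b * (1 - t) \<le> c - t * a" by (simp add: pos_le_divide_eq[OF t1])
    then show ?thesis by (simp add: mult.commute)
  qed
  have a0: "0 \<le> a" unfolding a_def using bA A0 cSup_upper[of 0 "abs ` A"] by force
  have b0: "0 \<le> b" unfolding b_def using bB B0 cSup_upper[of 0 "abs ` B"] by force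
  have C0: "0 \<in> C" using comb[OF A0 B0] by simp
  have eA: "emeasure lborel A = ennreal (2 * a)" using sds_measure[OF sA mA A0 bA] unfolding a_def .
  have eB: "emeasure lborel B = ennreal (2 * b)" using sds_measure[OF sB mB B0 bB] unfolding b_def .
  have "ennreal t * emeasure lborel A + ennreal (1 - t) * emeasure lborel B
      = ennreal (t * (2 * a) + (1 - t) * (2 * b))"
    unfolding eA eB using a0 b0 t1 t(1) by (simp add: ennreal_mult ennreal_plus)
  also have "\<dots> \<le> ennreal (2 * c)" using k3 by (intro ennreal_leI) linarith
  also have "\<dots> = emeasure lborel C" using sds_measure[OF sC mC C0 bC] unfolding c_def by simp
  finally show ?thesis .
qed

lemma layer_cake_min:
  fixes f :: "real \<Rightarrow> real"
  assumes [measurable]: "f \<in> borel_measurable borel" and f0: "\<And>z. 0 \<le> f z"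
  shows "(\<integral>\<^sup>+ r. indicator {0<..<1} r * emeasure lborel {z. r < f z} \<partial>lborel)
       = (\<integral>\<^sup>+ z. ennreal (min 1 (f z)) \<partial>lborel)"
proof -
  have "(\<integral>\<^sup>+ r. indicator {0<..<1} r * emeasure lborel {z. r < f z} \<partial>lborel)
      = (\<integral>\<^sup>+ r. (\<integral>\<^sup>+ z. indicator {0<..<1} r * indicator {z. r < f z} z \<partial>lborel) \<partial>lborel)"
    by (intro nn_integral_cong, subst nn_integral_cmult) auto
  also have "\<dots> = (\<integral>\<^sup>+ z. (\<integral>\<^sup>+ r. indicator {0<..<1} r * indicator {z. r < f z} z \<partial>lborel) \<partial>lborel)"
    by (rule lborel_pair.Fubini') simp
  also have "\<dots> = (\<integral>\<^sup>+ z. (\<integral>\<^sup>+ r. indicator {0<..<min 1 (f z)} r \<partial>lborel) \<partial>lborel)"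
    by (intro nn_integral_cong) (auto simp: indicator_def)
  also have "\<dots> = (\<integral>\<^sup>+ z. ennreal (min 1 (f z)) \<partial>lborel)"
    using f0 by (intro nn_integral_cong) simp
  finally show ?thesis .
qed

lemma meas_level:
  fixes f :: "real \<Rightarrow> real"
  assumes [measurable]: "f \<in> borel_measurable borel"
  shows "(\<lambda>r. emeasure lborel {z. r < f z}) \<in> borel_measurable borel"
proof -
  have "(\<lambda>r. emeasure lborel (Pair r -` {(r, z). r < f z})) \<in> borel_measurable lborel"
  proof (rule lborel.measurable_emeasure_Pair)
    have "{(r, z). r < f z} = {x\<in>space (lborel \<Otimes>\<^sub>M lborel). fst x < f (snd x)}"
      by (auto simp: space_pair_measure)
    also have "\<dots> \<in> sets (lborel \<Otimes>\<^sub>M lborel)" by measurable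
    finally show "{(r, z). r < f z} \<in> sets (lborel \<Otimes>\<^sub>M lborel)" .
  qed
  then show ?thesis by simp
qed

lemma PL_core:
  fixes f0 f1 h :: "real \<Rightarrow> real" and t :: real
  assumes [measurable]: "f0 \<in> borel_measurable borel" "f1 \<in> borel_measurable borel" "h \<in> borel_measurable borel"
    and nn: "\<And>z. 0 \<le> f0 z" "\<And>z. 0 \<le> f1 z" "\<And>z. 0 \<le> h z"
    and sd: "sdf f0" "sdf f1" "sdf h"
    and one: "f0 0 = 1" "f1 0 = 1"
    and t: "0 < t" "t < 1"
    and hyp: "\<And>z w. f0 z powr t * f1 w powr (1 - t) \<le> h (t * z + (1 - t) * w)"
  shows "ennreal t * (\<integral>\<^sup>+ z. f0 z \<partial>lborel) + ennreal (1 - t) * (\<integral>\<^sup>+ z. f1 z \<partial>lborel)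
           \<le> (\<integral>\<^sup>+ z. h z \<partial>lborel)"
proof -
  have le1: "f0 z \<le> 1" "f1 z \<le> 1" for z
    using sd(1,2) one unfolding sdf_def by (metis abs_ge_zero abs_zero)+
  have I0: "(\<integral>\<^sup>+ z. f0 z \<partial>lborel) = (\<integral>\<^sup>+ r. indicator {0<..<1} r * emeasure lborel {z. r < f0 z} \<partial>lborel)"
    using layer_cake_min[of f0] nn le1 by (simp add: min_absorb2)
  have I1: "(\<integral>\<^sup>+ z. f1 z \<partial>lborel) = (\<integral>\<^sup>+ r. indicator {0<..<1} r * emeasure lborel {z. r < f1 z} \<partial>lborel)"
    using layer_cake_min[of f1] nn le1 by (simp add: min_absorb2)
  have Ih: "(\<integral>\<^sup>+ r. indicator {0<..<1} r * emeasure lborel {z. r < h z} \<partial>lborel) \<le> (\<integral>\<^sup>+ z. h z \<partial>lborel)"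
    using layer_cake_min[of h] nn by (auto intro!: nn_integral_mono ennreal_leI)
  have lev: "ennreal t * emeasure lborel {z. r < f0 z} + ennreal (1 - t) * emeasure lborel {z. r < f1 z}
      \<le> emeasure lborel {z. r < h z}" if r: "0 < r" "r < 1" for r
  proof (rule BM_sds)
    show "sds {z. r < f0 z}" "sds {z. r < f1 z}" "sds {z. r < h z}"
      using sd unfolding sds_def sdf_def by (auto intro: less_le_trans)
    show "{z. r < f0 z} \<in> sets borel" "{z. r < f1 z} \<in> sets borel" "{z. r < h z} \<in> sets borel"
      by simp_all
    show "0 \<in> {z. r < f0 z}" "0 \<in> {z. r < f1 z}" using one r by auto
    show "0 < t" "t < 1" by fact+
    fix z w assume z: "z \<in> {z. r < f0 z}" and w: "w \<in> {z. r < f1 z}"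
    have "r = r powr t * r powr (1 - t)" using r by (simp add: powr_add[symmetric])
    also have "\<dots> < f0 z powr t * f1 w powr (1 - t)"
      using z w r t by (intro mult_strict_mono powr_less_mono2) auto
    also have "\<dots> \<le> h (t * z + (1 - t) * w)" by (rule hyp)
    finally show "t * z + (1 - t) * w \<in> {z. r < h z}" by simp
  qed
  have m0: "(\<lambda>r. indicator {0<..<1} r * emeasure lborel {z. r < f0 z}) \<in> borel_measurable borel"
    using meas_level[of f0] by simp
  have m1: "(\<lambda>r. indicator {0<..<1} r * emeasure lborel {z. r < f1 z}) \<in> borel_measurable borel"
    using meas_level[of f1] by simp
  have "ennreal t * (\<integral>\<^sup>+ z. f0 z \<partial>lborel) + ennreal (1 - t) * (\<integral>\<^sup>+ z. f1 z \<partial>lborel)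
      = (\<integral>\<^sup>+ r. ennreal t * (indicator {0<..<1} r * emeasure lborel {z. r < f0 z})
              + ennreal (1 - t) * (indicator {0<..<1} r * emeasure lborel {z. r < f1 z}) \<partial>lborel)"
    unfolding I0 I1 using m0 m1
    by (subst nn_integral_add) (auto simp: nn_integral_cmult)
  also have "\<dots> \<le> (\<integral>\<^sup>+ r. indicator {0<..<1} r * emeasure lborel {z. r < h z} \<partial>lborel)"
  proof (rule nn_integral_mono)
    fix r show "ennreal t * (indicator {0<..<1} r * emeasure lborel {z. r < f0 z})
              + ennreal (1 - t) * (indicator {0<..<1} r * emeasure lborel {z. r < f1 z})
        \<le> indicator {0<..<1} r * emeasure lborel {z. r < h z}"
      using lev[of r] by (cases "r \<in> {0<..<1}") auto
  qed
  also have "\<dots> \<le> (\<integral>\<^sup>+ z. h z \<partial>lborel)" by (rule Ih)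
  finally show ?thesis .
qed

lemma sdf_div: "sdf f \<Longrightarrow> 0 < c \<Longrightarrow> sdf (\<lambda>z. f z / c)"
  unfolding sdf_def by (auto intro: divide_right_mono)

lemma sdf_zero: "sdf f \<Longrightarrow> (\<And>z. 0 \<le> f z) \<Longrightarrow> f 0 = 0 \<Longrightarrow> f z = 0"
  unfolding sdf_def by (metis abs_ge_zero abs_zero order_antisym)

lemma nn_integral_div_const:
  fixes f :: "real \<Rightarrow> real"
  assumes [measurable]: "f \<in> borel_measurable borel" and "0 < c" "\<And>z. 0 \<le> f z"
    and "(\<integral>\<^sup>+ z. f z \<partial>lborel) = ennreal A" "0 \<le> A"
  shows "(\<integral>\<^sup>+ z. f z / c \<partial>lborel) = ennreal (A / c)"
proof -
  have "(\<integral>\<^sup>+ z. f z / c \<partial>lborel) = (\<integral>\<^sup>+ z. ennreal (1 / c) * ennreal (f z) \<partial>lborel)"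
    using assms by (intro nn_integral_cong) (simp add: ennreal_mult[symmetric])
  also have "\<dots> = ennreal (1 / c) * ennreal A" by (subst nn_integral_cmult) (auto simp: assms)
  also have "\<dots> = ennreal (1 / c * A)" using assms by (subst ennreal_mult) auto
  also have "\<dots> = ennreal (A / c)" by simp
  finally show ?thesis .
qed

lemma PL:
  fixes f0 f1 h :: "real \<Rightarrow> real" and t A B :: real
  assumes m[measurable]: "f0 \<in> borel_measurable borel" "f1 \<in> borel_measurable borel" "h \<in> borel_measurable borel"
    and nn: "\<And>z. 0 \<le> f0 z" "\<And>z. 0 \<le> f1 z" "\<And>z. 0 \<le> h z"
    and sd: "sdf f0" "sdf f1" "sdf h"
    and t: "0 < t" "t < 1"
    and hyp: "\<And>z w. f0 z powr t * f1 w powr (1 - t) \<le> h (t * z + (1 - t) * w)"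
    and IA: "(\<integral>\<^sup>+ z. f0 z \<partial>lborel) = ennreal A" "0 \<le> A"
    and IB: "(\<integral>\<^sup>+ z. f1 z \<partial>lborel) = ennreal B" "0 \<le> B"
  shows "ennreal (A powr t * B powr (1 - t)) \<le> (\<integral>\<^sup>+ z. h z \<partial>lborel)"
proof (cases "A = 0 \<or> B = 0")
  case True
  then show ?thesis by auto
next
  case False
  then have Apos: "0 < A" and Bpos: "0 < B" using IA IB by auto
  define M0 where "M0 = f0 0"
  define M1 where "M1 = f1 0"
  have M0: "0 < M0"
  proof (rule ccontr)
    assume "\<not> 0 < M0"
    then have "f0 0 = 0" using nn(1)[of 0] unfolding M0_def by simp
    then have "\<And>z. f0 z = 0" using sdf_zero[OF sd(1) nn(1)] by blast
    then have "A = 0" using IA by simp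
    then show False using Apos by simp
  qed
  have M1: "0 < M1"
  proof (rule ccontr)
    assume "\<not> 0 < M1"
    then have "f1 0 = 0" using nn(2)[of 0] unfolding M1_def by simp
    then have "\<And>z. f1 z = 0" using sdf_zero[OF sd(2) nn(2)] by blast
    then have "B = 0" using IB by simp
    then show False using Bpos by simp
  qed
  define K where "K = M0 powr t * M1 powr (1 - t)"
  have K: "0 < K" unfolding K_def using M0 M1 by simp
  have core: "ennreal t * (\<integral>\<^sup>+ z. f0 z / M0 \<partial>lborel) + ennreal (1 - t) * (\<integral>\<^sup>+ z. f1 z / M1 \<partial>lborel)
           \<le> (\<integral>\<^sup>+ z. h z / K \<partial>lborel)"
  proof (rule PL_core)
    show "(\<lambda>z. f0 z / M0) \<in> borel_measurable borel" "(\<lambda>z. f1 z / M1) \<in> borel_measurable borel"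
      "(\<lambda>z. h z / K) \<in> borel_measurable borel" by simp_all
    show "0 \<le> f0 z / M0" "0 \<le> f1 z / M1" "0 \<le> h z / K" for z using nn M0 M1 K by simp_all
    show "sdf (\<lambda>z. f0 z / M0)" "sdf (\<lambda>z. f1 z / M1)" "sdf (\<lambda>z. h z / K)"
      using sdf_div sd M0 M1 K by auto
    show "f0 0 / M0 = 1" "f1 0 / M1 = 1" using M0 M1 unfolding M0_def M1_def by simp_all
    show "0 < t" "t < 1" by fact+
    fix z w
    have "(f0 z / M0) powr t * (f1 w / M1) powr (1 - t) = (f0 z powr t * f1 w powr (1 - t)) / K"
      unfolding K_def using nn M0 M1 by (simp add: powr_divide)
    also have "\<dots> \<le> h (t * z + (1 - t) * w) / K" using hyp K by (simp add: divide_right_mono)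
    finally show "(f0 z / M0) powr t * (f1 w / M1) powr (1 - t) \<le> h (t * z + (1 - t) * w) / K" .
  qed
  have e0: "(\<integral>\<^sup>+ z. f0 z / M0 \<partial>lborel) = ennreal (A / M0)"
    by (rule nn_integral_div_const) (use M0 nn IA in auto)
  have e1: "(\<integral>\<^sup>+ z. f1 z / M1 \<partial>lborel) = ennreal (B / M1)"
    by (rule nn_integral_div_const) (use M1 nn IB in auto)
  have eh: "(\<integral>\<^sup>+ z. h z / K \<partial>lborel) = ennreal (1 / K) * (\<integral>\<^sup>+ z. h z \<partial>lborel)"
  proof -
    have "(\<integral>\<^sup>+ z. h z / K \<partial>lborel) = (\<integral>\<^sup>+ z. ennreal (1 / K) * ennreal (h z) \<partial>lborel)"
      using nn K by (intro nn_integral_cong) (simp add: ennreal_mult[symmetric])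
    also have "\<dots> = ennreal (1 / K) * (\<integral>\<^sup>+ z. h z \<partial>lborel)" by (subst nn_integral_cmult) auto
    finally show ?thesis .
  qed
  have c2: "ennreal (t * (A / M0) + (1 - t) * (B / M1)) \<le> ennreal (1 / K) * (\<integral>\<^sup>+ z. h z \<partial>lborel)"
  proof -
    have "ennreal (t * (A / M0) + (1 - t) * (B / M1)) = ennreal t * ennreal (A / M0) + ennreal (1 - t) * ennreal (B / M1)"
      using t Apos Bpos M0 M1 by (simp add: ennreal_mult ennreal_plus del: times_divide_eq_right)
    then show ?thesis using core unfolding e0 e1 eh by simp
  qed
  have c3: "ennreal K * ennreal (t * (A / M0) + (1 - t) * (B / M1)) \<le> (\<integral>\<^sup>+ z. h z \<partial>lborel)"
  proof -
    have "ennreal K * ennreal (t * (A / M0) + (1 - t) * (B / M1))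
        \<le> ennreal K * (ennreal (1 / K) * (\<integral>\<^sup>+ z. h z \<partial>lborel))"
      using c2 by (rule mult_left_mono) simp
    also have "\<dots> = (\<integral>\<^sup>+ z. h z \<partial>lborel)"
      using K by (simp add: mult.assoc[symmetric] ennreal_mult[symmetric])
    finally show ?thesis .
  qed
  have "A powr t * B powr (1 - t) = K * ((A / M0) powr t * (B / M1) powr (1 - t))"
    unfolding K_def using M0 M1 Apos Bpos by (simp add: powr_divide field_simps)
  also have "\<dots> \<le> K * (t * (A / M0) + (1 - t) * (B / M1))"
    using K t Apos Bpos M0 M1 by (intro mult_left_mono Youngs_inequality_0) auto
  finally have fin: "A powr t * B powr (1 - t) \<le> K * (t * (A / M0) + (1 - t) * (B / M1))" .
  have nn2: "0 \<le> t * (A / M0) + (1 - t) * (B / M1)" using t Apos Bpos M0 M1 by simp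
  have "ennreal (A powr t * B powr (1 - t)) \<le> ennreal (K * (t * (A / M0) + (1 - t) * (B / M1)))"
    using fin by (rule ennreal_leI)
  also have "\<dots> = ennreal K * ennreal (t * (A / M0) + (1 - t) * (B / M1))"
    using K nn2 by (simp add: ennreal_mult del: times_divide_eq_right)
  finally show ?thesis using c3 by (rule order.trans)
qed

definition pd :: "real \<Rightarrow> real \<Rightarrow> real" where
  "pd l y = inverse (sqrt l) * std_normal_density (inverse (sqrt l) * y)"

lemma pd_normal: "0 < l \<Longrightarrow> pd l y = normal_density 0 (sqrt l) y"
  unfolding pd_def normal_density_def
  by (simp add: real_sqrt_mult power_mult_distrib divide_simps power2_eq_square)

lemma pd_pos: assumes "0 < l" shows "0 < pd l y"
proof -
  have "0 < sqrt l" using assms by simp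
  then show ?thesis using normal_density_pos[of "sqrt l" 0 y] by (simp add: pd_normal[OF assms])
qed

lemma pd_nn: "0 < l \<Longrightarrow> 0 \<le> pd l y"
  using pd_pos[of l y] by simp

lemma pd_meas[measurable]: "pd l \<in> borel_measurable borel"
  unfolding pd_def[abs_def] by measurable

lemma pd_int: "0 < l \<Longrightarrow> (\<integral>\<^sup>+ y. pd l y \<partial>lborel) = 1"
proof -
  assume l: "0 < l"
  interpret prob_space "density lborel (normal_density 0 (sqrt l))"
    by (rule prob_space_normal_density) (use l in simp)
  have "(\<integral>\<^sup>+ y. pd l y \<partial>lborel) = emeasure (density lborel (normal_density 0 (sqrt l))) UNIV"
    using l by (simp add: emeasure_density pd_normal)
  also have "\<dots> = 1" using emeasure_space_1 by simp
  finally show ?thesis .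
qed

lemma pd_explicit: "0 < l \<Longrightarrow> pd l y = (1 / sqrt (2 * pi * l)) * exp (- y\<^sup>2 / (2 * l))"
  by (simp add: pd_normal normal_density_def)

lemma pd_sdf: "0 < l \<Longrightarrow> sdf (pd l)"
  unfolding sdf_def
proof (intro allI impI)
  fix z w :: real assume l: "0 < l" and zw: "\<bar>z\<bar> \<le> \<bar>w\<bar>"
  have "z\<^sup>2 \<le> w\<^sup>2" using zw by (simp add: abs_le_square_iff)
  then have "- w\<^sup>2 / (2 * l) \<le> - z\<^sup>2 / (2 * l)" using l by (simp add: divide_right_mono)
  then show "pd l w \<le> pd l z" using l by (simp add: pd_explicit divide_right_mono)
qed

lemma pd_lc:
  assumes l: "0 < l" and t: "0 < t" "t < 1"
  shows "pd l z powr t * pd l w powr (1 - t) \<le> pd l (t * z + (1 - t) * w)"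
proof -
  define C where "C = 1 / sqrt (2 * pi * l)"
  have C: "0 < C" unfolding C_def using l by simp
  have "pd l z powr t * pd l w powr (1 - t)
      = exp (t * ln (C * exp (- z\<^sup>2 / (2 * l)))) * exp ((1 - t) * ln (C * exp (- w\<^sup>2 / (2 * l))))"
    using l C by (simp add: pd_explicit powr_def C_def)
  also have "\<dots> = exp (ln C - (t * z\<^sup>2 + (1 - t) * w\<^sup>2) / (2 * l))"
    using C by (simp add: ln_mult exp_add[symmetric] algebra_simps add_divide_distrib diff_divide_distrib)
  also have "\<dots> \<le> exp (ln C - (t * z + (1 - t) * w)\<^sup>2 / (2 * l))"
  proof -
    have "(t * z + (1 - t) * w)\<^sup>2 \<le> t * z\<^sup>2 + (1 - t) * w\<^sup>2"
    proof -
      have "t * z\<^sup>2 + (1 - t) * w\<^sup>2 - (t * z + (1 - t) * w)\<^sup>2 = t * (1 - t) * (z - w)\<^sup>2"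
        by (simp add: power2_eq_square algebra_simps)
      also have "\<dots> \<ge> 0" using t by simp
      finally show ?thesis by simp
    qed
    then show ?thesis using l by (simp add: divide_right_mono)
  qed
  also have "\<dots> = C * exp (- ((t * z + (1 - t) * w)\<^sup>2 / (2 * l)))"
  proof -
    have "exp (ln C - (t * z + (1 - t) * w)\<^sup>2 / (2 * l)) = C / exp ((t * z + (1 - t) * w)\<^sup>2 / (2 * l))"
      using C by (simp add: exp_diff)
    moreover have "C / exp ((t * z + (1 - t) * w)\<^sup>2 / (2 * l)) = C * exp (- ((t * z + (1 - t) * w)\<^sup>2 / (2 * l)))"
      unfolding exp_minus inverse_eq_divide by simp
    ultimately show ?thesis by simp
  qed
  also have "\<dots> = pd l (t * z + (1 - t) * w)"
    using l by (simp add: pd_explicit C_def)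
  finally show ?thesis .
qed

definition Q :: "'i set \<Rightarrow> ('i \<Rightarrow> real) \<Rightarrow> real \<Rightarrow> ('i \<Rightarrow> real) \<Rightarrow> real" where
  "Q I l u x = (if (\<Sum>k\<in>I. (x k)\<^sup>2) < u then (\<Prod>k\<in>I. pd (l k) (x k)) else 0)"

definition nnF :: "'i set \<Rightarrow> ('i \<Rightarrow> real) \<Rightarrow> real \<Rightarrow> ennreal" where
  "nnF I l u = (\<integral>\<^sup>+ x. ennreal (Q I l u x) \<partial>PiM I (\<lambda>_. lborel))"

lemma Q_meas[measurable]:
  "finite I \<Longrightarrow> Q I l u \<in> borel_measurable (PiM I (\<lambda>_. lborel))"
  unfolding Q_def[abs_def] by measurable

lemma Q_nn: "(\<And>k. 0 < l k) \<Longrightarrow> 0 \<le> Q I l u x"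
  unfolding Q_def by (auto intro!: prod_nonneg pd_nn)

interpretation PS: product_sigma_finite "\<lambda>_. lborel :: real measure"
  by standard

lemma Q_insert:
  assumes "finite I" "k \<notin> I"
  shows "Q (insert k I) l u (x(k := y)) = pd (l k) y * Q I l (u - y\<^sup>2) x"
proof -
  have s0: "(\<Sum>j\<in>I. ((x(k := y)) j)\<^sup>2) = (\<Sum>j\<in>I. (x j)\<^sup>2)"
    using assms by (intro sum.cong) auto
  have p0: "(\<Prod>j\<in>I. pd (l j) ((x(k := y)) j)) = (\<Prod>j\<in>I. pd (l j) (x j))"
    using assms by (intro prod.cong) auto
  have s: "(\<Sum>j\<in>insert k I. ((x(k := y)) j)\<^sup>2) = y\<^sup>2 + (\<Sum>j\<in>I. (x j)\<^sup>2)"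
    using assms s0 by (simp add: sum.insert)
  have p: "(\<Prod>j\<in>insert k I. pd (l j) ((x(k := y)) j)) = pd (l k) y * (\<Prod>j\<in>I. pd (l j) (x j))"
    using assms p0 by (simp add: prod.insert)
  show ?thesis unfolding Q_def s p by auto
qed

lemma nnF_insert:
  assumes I: "finite I" "k \<notin> I" and l: "\<And>k. 0 < l k"
  shows "nnF (insert k I) l u = (\<integral>\<^sup>+ y. ennreal (pd (l k) y) * nnF I l (u - y\<^sup>2) \<partial>lborel)"
proof -
  have "nnF (insert k I) l u = (\<integral>\<^sup>+ y. (\<integral>\<^sup>+ x. ennreal (Q (insert k I) l u (x(k := y))) \<partial>PiM I (\<lambda>_. lborel)) \<partial>lborel)"
    unfolding nnF_def using I by (subst PS.product_nn_integral_insert_rev) auto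
  also have "\<dots> = (\<integral>\<^sup>+ y. (\<integral>\<^sup>+ x. ennreal (pd (l k) y) * ennreal (Q I l (u - y\<^sup>2) x) \<partial>PiM I (\<lambda>_. lborel)) \<partial>lborel)"
    using I l by (intro nn_integral_cong) (simp add: Q_insert ennreal_mult pd_nn Q_nn)
  also have "\<dots> = (\<integral>\<^sup>+ y. ennreal (pd (l k) y) * nnF I l (u - y\<^sup>2) \<partial>lborel)"
    unfolding nnF_def using I by (intro nn_integral_cong) (simp add: nn_integral_cmult)
  finally show ?thesis .
qed

lemma nnF_empty: "nnF {} l u = (if 0 < u then 1 else 0)"
  unfolding nnF_def Q_def by (simp add: PiM_empty nn_integral_count_space_finite)

lemma nnF_mono: "(\<And>k. 0 < l k) \<Longrightarrow> u \<le> v \<Longrightarrow> nnF I l u \<le> nnF I l v"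
  unfolding nnF_def Q_def by (intro nn_integral_mono) (auto intro!: prod_nonneg pd_nn)

lemma nnF_le1:
  assumes "finite I" "\<And>k. 0 < l k"
  shows "nnF I l u \<le> 1"
  using assms(1)
proof (induction I arbitrary: u rule: finite_induct)
  case empty then show ?case by (simp add: nnF_empty)
next
  case (insert k I)
  have "nnF (insert k I) l u = (\<integral>\<^sup>+ y. ennreal (pd (l k) y) * nnF I l (u - y\<^sup>2) \<partial>lborel)"
    using insert assms by (intro nnF_insert) auto
  also have "\<dots> \<le> (\<integral>\<^sup>+ y. ennreal (pd (l k) y) \<partial>lborel)"
    using insert.IH by (intro nn_integral_mono) (simp add: mult_left_le)
  also have "\<dots> = 1" using pd_int assms(2) by simp
  finally show ?case .
qed

definition G :: "'i set \<Rightarrow> ('i \<Rightarrow> real) \<Rightarrow> real \<Rightarrow> real" where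
  "G I l u = enn2real (nnF I l u)"

lemma nnF_G: "finite I \<Longrightarrow> (\<And>k. 0 < l k) \<Longrightarrow> nnF I l u = ennreal (G I l u)"
  unfolding G_def using nnF_le1[of I l u] by (simp add: ennreal_enn2real_if top_unique)
    (metis ennreal_enn2real ennreal_one_less_top order_le_less_trans less_top)

lemma G_nn: "0 \<le> G I l u" unfolding G_def by simp

lemma G_le1: "finite I \<Longrightarrow> (\<And>k. 0 < l k) \<Longrightarrow> G I l u \<le> 1"
  unfolding G_def using nnF_le1[of I l u] by (simp add: enn2real_leI)

lemma G_mono: "finite I \<Longrightarrow> (\<And>k. 0 < l k) \<Longrightarrow> u \<le> v \<Longrightarrow> G I l u \<le> G I l v"
  using nnF_mono[of l u v I] nnF_G[of I l] by (simp add: G_nn)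

lemma G_meas[measurable]: "finite I \<Longrightarrow> (\<And>k. 0 < l k) \<Longrightarrow> G I l \<in> borel_measurable borel"
  by (rule borel_measurable_mono) (auto simp: mono_def G_mono)

definition lcf :: "(real \<Rightarrow> real) \<Rightarrow> bool" where
  "lcf g \<longleftrightarrow> (\<forall>x y t. 0 < t \<longrightarrow> t < 1 \<longrightarrow> g x powr t * g y powr (1 - t) \<le> g (t * x + (1 - t) * y))"

lemma G_empty: "G {} l u = (if 0 < u then 1 else 0)"
  unfolding G_def by (simp add: nnF_empty)

lemma sq_conv: "(t * z + (1 - t) * w)\<^sup>2 \<le> t * z\<^sup>2 + (1 - t) * w\<^sup>2" if "0 \<le> t" "t \<le> 1" for t z w :: real
proof -
  have "t * z\<^sup>2 + (1 - t) * w\<^sup>2 - (t * z + (1 - t) * w)\<^sup>2 = t * (1 - t) * (z - w)\<^sup>2"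
    by (simp add: power2_eq_square algebra_simps)
  also have "\<dots> \<ge> 0" using that by simp
  finally show ?thesis by simp
qed

lemma G_insert:
  assumes "finite I" "k \<notin> I" "\<And>k. 0 < l k"
  shows "(\<integral>\<^sup>+ z. ennreal (pd (l k) z * G I l (u - z\<^sup>2)) \<partial>lborel) = ennreal (G (insert k I) l u)"
proof -
  have "(\<integral>\<^sup>+ z. ennreal (pd (l k) z * G I l (u - z\<^sup>2)) \<partial>lborel) = nnF (insert k I) l u"
    using assms by (subst nnF_insert) (auto intro!: nn_integral_cong simp: nnF_G ennreal_mult pd_nn G_nn)
  also have "\<dots> = ennreal (G (insert k I) l u)" using assms by (intro nnF_G) auto
  finally show ?thesis .
qed

lemma G_lc:
  assumes "finite I" "\<And>k. 0 < l k"
  shows "lcf (G I l)"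
  using assms(1)
proof (induction I rule: finite_induct)
  case empty
  show ?case unfolding lcf_def G_empty
  proof (intro allI impI)
    fix x y t :: real assume t: "0 < t" "t < 1"
    show "(if 0 < x then 1 else 0) powr t * (if 0 < y then 1 else 0) powr (1 - t)
          \<le> (if 0 < t * x + (1 - t) * y then 1 else (0::real))"
    proof (cases "0 < x \<and> 0 < y")
      case True
      then have "0 < t * x + (1 - t) * y" using t by (intro add_pos_pos) auto
      then show ?thesis using True by simp
    next
      case False
      then show ?thesis by auto
    qed
  qed
next
  case (insert k I)
  note l = assms(2)
  have lk: "0 < l k" by (rule l)
  have Gm: "\<And>u v. u \<le> v \<Longrightarrow> G I l u \<le> G I l v" using insert l by (intro G_mono) auto
  have Gmeas[measurable]: "G I l \<in> borel_measurable borel" using insert l by (intro G_meas) auto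
  have sdG: "sdf (\<lambda>z. pd (l k) z * G I l (u - z\<^sup>2))" for u
    unfolding sdf_def
  proof (intro allI impI)
    fix z w :: real assume zw: "\<bar>z\<bar> \<le> \<bar>w\<bar>"
    have "w\<^sup>2 \<ge> z\<^sup>2" using zw by (simp add: abs_le_square_iff)
    then have "G I l (u - w\<^sup>2) \<le> G I l (u - z\<^sup>2)" by (intro Gm) simp
    moreover have "pd (l k) w \<le> pd (l k) z" using pd_sdf[OF lk] zw unfolding sdf_def by blast
    ultimately show "pd (l k) w * G I l (u - w\<^sup>2) \<le> pd (l k) z * G I l (u - z\<^sup>2)"
      by (intro mult_mono) (auto simp: G_nn pd_nn[OF lk])
  qed
  show ?case unfolding lcf_def
  proof (intro allI impI)
    fix x y t :: real assume t: "0 < t" "t < 1"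
    have "ennreal (G (insert k I) l x powr t * G (insert k I) l y powr (1 - t))
        \<le> (\<integral>\<^sup>+ z. ennreal (pd (l k) z * G I l (t * x + (1 - t) * y - z\<^sup>2)) \<partial>lborel)"
    proof (rule PL)
      show "(\<lambda>z. pd (l k) z * G I l (x - z\<^sup>2)) \<in> borel_measurable borel"
        "(\<lambda>z. pd (l k) z * G I l (y - z\<^sup>2)) \<in> borel_measurable borel"
        "(\<lambda>z. pd (l k) z * G I l (t * x + (1 - t) * y - z\<^sup>2)) \<in> borel_measurable borel" by simp_all
      show "0 \<le> pd (l k) z * G I l (x - z\<^sup>2)" "0 \<le> pd (l k) z * G I l (y - z\<^sup>2)"
        "0 \<le> pd (l k) z * G I l (t * x + (1 - t) * y - z\<^sup>2)" for z
        by (auto intro!: mult_nonneg_nonneg pd_nn[OF lk] G_nn)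
      show "sdf (\<lambda>z. pd (l k) z * G I l (x - z\<^sup>2))" "sdf (\<lambda>z. pd (l k) z * G I l (y - z\<^sup>2))"
        "sdf (\<lambda>z. pd (l k) z * G I l (t * x + (1 - t) * y - z\<^sup>2))" by (rule sdG)+
      show "0 < t" "t < 1" by fact+
      show "(\<integral>\<^sup>+ z. ennreal (pd (l k) z * G I l (x - z\<^sup>2)) \<partial>lborel) = ennreal (G (insert k I) l x)"
        "(\<integral>\<^sup>+ z. ennreal (pd (l k) z * G I l (y - z\<^sup>2)) \<partial>lborel) = ennreal (G (insert k I) l y)"
        using insert l by (intro G_insert; auto)+
      show "0 \<le> G (insert k I) l x" "0 \<le> G (insert k I) l y" by (rule G_nn)+
      fix z w :: real
      define v where "v = t * z + (1 - t) * w"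
      have "(pd (l k) z * G I l (x - z\<^sup>2)) powr t * (pd (l k) w * G I l (y - w\<^sup>2)) powr (1 - t)
          = (pd (l k) z powr t * pd (l k) w powr (1 - t)) * (G I l (x - z\<^sup>2) powr t * G I l (y - w\<^sup>2) powr (1 - t))"
        using lk by (simp add: powr_mult pd_nn G_nn)
      also have "\<dots> \<le> pd (l k) v * G I l (t * (x - z\<^sup>2) + (1 - t) * (y - w\<^sup>2))"
      proof (rule mult_mono)
        show "pd (l k) z powr t * pd (l k) w powr (1 - t) \<le> pd (l k) v"
          unfolding v_def by (rule pd_lc[OF lk t])
        show "G I l (x - z\<^sup>2) powr t * G I l (y - w\<^sup>2) powr (1 - t) \<le> G I l (t * (x - z\<^sup>2) + (1 - t) * (y - w\<^sup>2))"
          using insert.IH t unfolding lcf_def by blast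
        show "0 \<le> pd (l k) v" by (rule pd_nn[OF lk])
        show "0 \<le> G I l (x - z\<^sup>2) powr t * G I l (y - w\<^sup>2) powr (1 - t)" by simp
      qed
      also have "\<dots> \<le> pd (l k) v * G I l (t * x + (1 - t) * y - v\<^sup>2)"
      proof (rule mult_left_mono)
        have "v\<^sup>2 \<le> t * z\<^sup>2 + (1 - t) * w\<^sup>2" unfolding v_def using t by (intro sq_conv) auto
        then have "t * (x - z\<^sup>2) + (1 - t) * (y - w\<^sup>2) \<le> t * x + (1 - t) * y - v\<^sup>2"
          by (simp add: algebra_simps)
        then show "G I l (t * (x - z\<^sup>2) + (1 - t) * (y - w\<^sup>2)) \<le> G I l (t * x + (1 - t) * y - v\<^sup>2)"
          by (rule Gm)
        show "0 \<le> pd (l k) v" by (rule pd_nn[OF lk])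
      qed
      finally show "(pd (l k) z * G I l (x - z\<^sup>2)) powr t * (pd (l k) w * G I l (y - w\<^sup>2)) powr (1 - t)
          \<le> pd (l k) (t * z + (1 - t) * w) * G I l (t * x + (1 - t) * y - (t * z + (1 - t) * w)\<^sup>2)"
        unfolding v_def .
    qed
    also have "\<dots> = ennreal (G (insert k I) l (t * x + (1 - t) * y))"
      using insert l by (intro G_insert) auto
    finally show "G (insert k I) l x powr t * G (insert k I) l y powr (1 - t) \<le> G (insert k I) l (t * x + (1 - t) * y)"
      by (simp add: ennreal_le_iff G_nn)
  qed
qed

lemma powr_split: "0 \<le> (x::real) \<Longrightarrow> x powr t * x powr (1 - t) = x"
  by (cases "x = 0") (simp_all add: powr_add[symmetric])

lemma lcf_prod:
  assumes lc: "lcf g" and nn: "\<And>x. 0 \<le> g x"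
    and abd: "a \<le> b" "b \<le> d" "a + d = b + c"
  shows "g a * g d \<le> g b * g c"
proof (cases "a = b \<or> b = d")
  case True
  then show ?thesis using abd by (auto simp: mult.commute)
next
  case False
  then have ab: "a < b" and bd: "b < d" using abd by auto
  define t where "t = (d - b) / (d - a)"
  have t: "0 < t" "t < 1" unfolding t_def using ab bd by (auto simp: field_simps)
  have tda: "t * d - t * a = d - b" proof -
    have "t * d - t * a = t * (d - a)" by (simp add: algebra_simps)
    also have "\<dots> = d - b" unfolding t_def using ab bd by simp
    finally show ?thesis .
  qed
  have b: "b = t * a + (1 - t) * d" using tda by (simp add: algebra_simps)
  have c: "c = (1 - t) * a + (1 - (1 - t)) * d" using abd b by (simp add: algebra_simps)
  have 1: "g a powr t * g d powr (1 - t) \<le> g b" using lc t b unfolding lcf_def by auto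
  have 2: "g a powr (1 - t) * g d powr (1 - (1 - t)) \<le> g c"
  proof -
    have "0 < 1 - t" "1 - t < 1" using t by auto
    then have "g a powr (1 - t) * g d powr (1 - (1 - t)) \<le> g ((1 - t) * a + (1 - (1 - t)) * d)"
      using lc unfolding lcf_def by blast
    then show ?thesis using c by simp
  qed
  have "g a * g d = (g a powr t * g a powr (1 - t)) * (g d powr t * g d powr (1 - t))"
    using powr_split[OF nn[of a], of t] powr_split[OF nn[of d], of t] by simp
  also have "\<dots> = (g a powr t * g d powr (1 - t)) * (g a powr (1 - t) * g d powr (1 - (1 - t)))"
    by (simp add: algebra_simps)
  also have "\<dots> \<le> g b * g c" using 1 2 by (intro mult_mono) (auto simp: nn)
  finally show ?thesis .
qed

definition Nt :: "'i set \<Rightarrow> ('i \<Rightarrow> real) \<Rightarrow> 'i \<Rightarrow> real \<Rightarrow> ennreal" where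
  "Nt I l j s = (\<integral>\<^sup>+ x. ennreal (Q I l s x * ((x j)\<^sup>2 / l j)) \<partial>PiM I (\<lambda>_. lborel))"

lemma Nt_insert:
  assumes I: "finite I" "j \<notin> I" and l: "\<And>k. 0 < l k"
  shows "Nt (insert j I) l j s = (\<integral>\<^sup>+ z. ennreal (pd (l j) z * (z\<^sup>2 / l j) * G I l (s - z\<^sup>2)) \<partial>lborel)"
proof -
  have "Nt (insert j I) l j s = (\<integral>\<^sup>+ z. (\<integral>\<^sup>+ x. ennreal (Q (insert j I) l s (x(j := z)) * (((x(j:=z)) j)\<^sup>2 / l j)) \<partial>PiM I (\<lambda>_. lborel)) \<partial>lborel)"
    unfolding Nt_def using I by (subst PS.product_nn_integral_insert_rev) auto
  also have "\<dots> = (\<integral>\<^sup>+ z. (\<integral>\<^sup>+ x. ennreal (pd (l j) z * (z\<^sup>2 / l j)) * ennreal (Q I l (s - z\<^sup>2) x) \<partial>PiM I (\<lambda>_. lborel)) \<partial>lborel)"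
  proof (intro nn_integral_cong)
    fix z x
    have q: "Q (insert j I) l s (x(j := z)) = pd (l j) z * Q I l (s - z\<^sup>2) x" by (rule Q_insert[OF I])
    have e1: "Q (insert j I) l s (x(j := z)) * (((x(j:=z)) j)\<^sup>2 / l j) = (pd (l j) z * (z\<^sup>2 / l j)) * Q I l (s - z\<^sup>2) x"
      unfolding q by simp
    have e2: "ennreal ((pd (l j) z * (z\<^sup>2 / l j)) * Q I l (s - z\<^sup>2) x) = ennreal (pd (l j) z * (z\<^sup>2 / l j)) * ennreal (Q I l (s - z\<^sup>2) x)"
    proof (rule ennreal_mult)
      show "0 \<le> pd (l j) z * (z\<^sup>2 / l j)" using pd_nn[OF l[of j], of z] l[of j] by simp
      show "0 \<le> Q I l (s - z\<^sup>2) x" using Q_nn l by blast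
    qed
    show "ennreal (Q (insert j I) l s (x(j := z)) * (((x(j:=z)) j)\<^sup>2 / l j)) = ennreal (pd (l j) z * (z\<^sup>2 / l j)) * ennreal (Q I l (s - z\<^sup>2) x)"
      unfolding e1 by (rule e2)
  qed
  also have "\<dots> = (\<integral>\<^sup>+ z. ennreal (pd (l j) z * (z\<^sup>2 / l j)) * nnF I l (s - z\<^sup>2) \<partial>lborel)"
    unfolding nnF_def using I by (intro nn_integral_cong) (simp add: nn_integral_cmult)
  also have "\<dots> = (\<integral>\<^sup>+ z. ennreal (pd (l j) z * (z\<^sup>2 / l j) * G I l (s - z\<^sup>2)) \<partial>lborel)"
  proof (intro nn_integral_cong)
    fix z
    have "0 \<le> pd (l j) z * (z\<^sup>2 / l j)" using pd_nn[OF l[of j], of z] l[of j] by simp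
    then show "ennreal (pd (l j) z * (z\<^sup>2 / l j)) * nnF I l (s - z\<^sup>2) = ennreal (pd (l j) z * (z\<^sup>2 / l j) * G I l (s - z\<^sup>2))"
      unfolding nnF_G[OF I(1) l] by (rule ennreal_mult[symmetric]) (rule G_nn)
  qed
  finally show ?thesis .
qed

lemma cross_pointwise:
  fixes g :: "real \<Rightarrow> real"
  assumes lc: "lcf g" and nn: "\<And>x. 0 \<le> g x" and st: "s \<le> t" and az: "0 \<le> az" and aw: "0 \<le> aw" and lj: "0 < lj"
  shows "az * aw * (z\<^sup>2 / lj) * g (s - z\<^sup>2) * g (t - w\<^sup>2) + aw * az * (w\<^sup>2 / lj) * g (s - w\<^sup>2) * g (t - z\<^sup>2)
       \<le> az * aw * (z\<^sup>2 / lj) * g (t - z\<^sup>2) * g (s - w\<^sup>2) + aw * az * (w\<^sup>2 / lj) * g (t - w\<^sup>2) * g (s - z\<^sup>2)"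
proof -
  define P where "P = g (t - z\<^sup>2) * g (s - w\<^sup>2)"
  define P' where "P' = g (t - w\<^sup>2) * g (s - z\<^sup>2)"
  have "(az * aw * (z\<^sup>2 / lj) * g (t - z\<^sup>2) * g (s - w\<^sup>2) + aw * az * (w\<^sup>2 / lj) * g (t - w\<^sup>2) * g (s - z\<^sup>2))
      - (az * aw * (z\<^sup>2 / lj) * g (s - z\<^sup>2) * g (t - w\<^sup>2) + aw * az * (w\<^sup>2 / lj) * g (s - w\<^sup>2) * g (t - z\<^sup>2))
      = az * aw / lj * ((z\<^sup>2 - w\<^sup>2) * (P - P'))"
    unfolding P_def P'_def by (simp add: algebra_simps add_divide_distrib diff_divide_distrib)
  also have "\<dots> \<ge> 0"
  proof -
    have "(z\<^sup>2 - w\<^sup>2) * (P - P') \<ge> 0"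
    proof (cases "w\<^sup>2 \<le> z\<^sup>2")
      case True
      have "g (s - z\<^sup>2) * g (t - w\<^sup>2) \<le> g (t - z\<^sup>2) * g (s - w\<^sup>2)"
        by (rule lcf_prod[OF lc nn]) (use st True in auto)
      then have "P' \<le> P" unfolding P_def P'_def by (simp add: mult.commute)
      then show ?thesis using True by simp
    next
      case False
      have "g (s - w\<^sup>2) * g (t - z\<^sup>2) \<le> g (t - w\<^sup>2) * g (s - z\<^sup>2)"
        by (rule lcf_prod[OF lc nn]) (use st False in auto)
      then have "P \<le> P'" unfolding P_def P'_def by (simp add: mult.commute)
      then show ?thesis using False by (simp add: mult_nonpos_nonpos)
    qed
    then show ?thesis using az aw lj by simp
  qed
  finally show ?thesis by simp
qed

lemma swap_nn:
  fixes F :: "real \<Rightarrow> real \<Rightarrow> ennreal"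
  assumes [measurable]: "(\<lambda>p. F (fst p) (snd p)) \<in> borel_measurable (lborel \<Otimes>\<^sub>M lborel)"
  shows "(\<integral>\<^sup>+ z. (\<integral>\<^sup>+ w. F z w \<partial>lborel) \<partial>lborel) = (\<integral>\<^sup>+ z. (\<integral>\<^sup>+ w. F w z \<partial>lborel) \<partial>lborel)"
proof -
  have "(\<integral>\<^sup>+ z. (\<integral>\<^sup>+ w. F z w \<partial>lborel) \<partial>lborel) = (\<integral>\<^sup>+ w. (\<integral>\<^sup>+ z. F z w \<partial>lborel) \<partial>lborel)"
    by (rule lborel_pair.Fubini'[symmetric]) simp
  then show ?thesis .
qed

lemma prod_int:
  fixes F H :: "real \<Rightarrow> real"
  assumes [measurable]: "F \<in> borel_measurable borel" "H \<in> borel_measurable borel"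
    and nn: "\<And>z. 0 \<le> F z" "\<And>z. 0 \<le> H z"
  shows "(\<integral>\<^sup>+ z. ennreal (F z) \<partial>lborel) * (\<integral>\<^sup>+ w. ennreal (H w) \<partial>lborel)
       = (\<integral>\<^sup>+ z. (\<integral>\<^sup>+ w. ennreal (F z * H w) \<partial>lborel) \<partial>lborel)"
proof -
  have "(\<integral>\<^sup>+ z. ennreal (F z) \<partial>lborel) * (\<integral>\<^sup>+ w. ennreal (H w) \<partial>lborel)
      = (\<integral>\<^sup>+ z. ennreal (F z) * (\<integral>\<^sup>+ w. ennreal (H w) \<partial>lborel) \<partial>lborel)"
    by (rule nn_integral_multc[symmetric]) simp
  also have "\<dots> = (\<integral>\<^sup>+ z. (\<integral>\<^sup>+ w. ennreal (F z) * ennreal (H w) \<partial>lborel) \<partial>lborel)"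
    by (intro nn_integral_cong nn_integral_cmult[symmetric]) simp
  also have "\<dots> = (\<integral>\<^sup>+ z. (\<integral>\<^sup>+ w. ennreal (F z * H w) \<partial>lborel) \<partial>lborel)"
    using nn by (intro nn_integral_cong) (simp add: ennreal_mult)
  finally show ?thesis .
qed

lemma sym_ineq:
  fixes ps ph :: "real \<Rightarrow> real \<Rightarrow> real"
  assumes [measurable]: "(\<lambda>p. ps (fst p) (snd p)) \<in> borel_measurable (lborel \<Otimes>\<^sub>M lborel)"
    "(\<lambda>p. ph (fst p) (snd p)) \<in> borel_measurable (lborel \<Otimes>\<^sub>M lborel)"
    and nn: "\<And>z w. 0 \<le> ps z w" "\<And>z w. 0 \<le> ph z w"
    and pw: "\<And>z w. ps z w + ps w z \<le> ph z w + ph w z"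
  shows "(\<integral>\<^sup>+ z. (\<integral>\<^sup>+ w. ennreal (ps z w) \<partial>lborel) \<partial>lborel) \<le> (\<integral>\<^sup>+ z. (\<integral>\<^sup>+ w. ennreal (ph z w) \<partial>lborel) \<partial>lborel)"
proof -
  have mps: "(\<lambda>(z, w). ps z w) \<in> borel_measurable (lborel \<Otimes>\<^sub>M lborel)" using assms(1) by (simp add: case_prod_beta')
  have mph: "(\<lambda>(z, w). ph z w) \<in> borel_measurable (lborel \<Otimes>\<^sub>M lborel)" using assms(2) by (simp add: case_prod_beta')
  have mps2[measurable]: "(\<lambda>(z, w). ps w z) \<in> borel_measurable (lborel \<Otimes>\<^sub>M lborel)"
    using measurable_comp[OF measurable_pair_swap' mps] by (simp add: comp_def case_prod_beta')
  have mph2[measurable]: "(\<lambda>(z, w). ph w z) \<in> borel_measurable (lborel \<Otimes>\<^sub>M lborel)"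
    using measurable_comp[OF measurable_pair_swap' mph] by (simp add: comp_def case_prod_beta')
  note mps[measurable] mph[measurable]
  define J where "J F = (\<integral>\<^sup>+ z. (\<integral>\<^sup>+ w. ennreal (F z w) \<partial>lborel) \<partial>lborel)" for F :: "real \<Rightarrow> real \<Rightarrow> real"
  have swp: "J ps = J (\<lambda>z w. ps w z)" "J ph = J (\<lambda>z w. ph w z)"
    unfolding J_def by (rule lborel_pair.Fubini'[symmetric], simp)+
  have add: "J F + J F' = J (\<lambda>z w. F z w + F' z w)"
    if [measurable]: "(\<lambda>(z, w). F z w) \<in> borel_measurable (lborel \<Otimes>\<^sub>M lborel)"
      "(\<lambda>(z, w). F' z w) \<in> borel_measurable (lborel \<Otimes>\<^sub>M lborel)"
      and "\<And>z w. 0 \<le> F z w" "\<And>z w. 0 \<le> F' z w" for F F'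
  proof -
    have "J F + J F' = (\<integral>\<^sup>+ z. (\<integral>\<^sup>+ w. ennreal (F z w) \<partial>lborel) + (\<integral>\<^sup>+ w. ennreal (F' z w) \<partial>lborel) \<partial>lborel)"
      unfolding J_def by (rule nn_integral_add[symmetric]) simp_all
    also have "\<dots> = J (\<lambda>z w. F z w + F' z w)"
      unfolding J_def using that(3,4)
      by (intro nn_integral_cong) (simp add: nn_integral_add[symmetric] ennreal_plus)
    finally show ?thesis .
  qed
  have "2 * J ps = J ps + J (\<lambda>z w. ps w z)" using swp by (simp add: mult_2)
  also have "\<dots> = J (\<lambda>z w. ps z w + ps w z)" by (rule add) (simp_all add: nn)
  also have "\<dots> \<le> J (\<lambda>z w. ph z w + ph w z)" unfolding J_def
    by (intro nn_integral_mono ennreal_leI pw)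
  also have "\<dots> = J ph + J (\<lambda>z w. ph w z)" by (rule add[symmetric]) (simp_all add: nn)
  also have "\<dots> = 2 * J ph" using swp by (simp add: mult_2)
  finally have "2 * J ps \<le> 2 * J ph" .
  then show ?thesis unfolding J_def by (subst (asm) ennreal_mult_le_mult_iff) auto
qed

lemma nnF_insert_G:
  assumes "finite I" "k \<notin> I" "\<And>k. 0 < l k"
  shows "nnF (insert k I) l u = (\<integral>\<^sup>+ z. ennreal (pd (l k) z * G I l (u - z\<^sup>2)) \<partial>lborel)"
proof -
  have "(\<integral>\<^sup>+ z. ennreal (pd (l k) z * G I l (u - z\<^sup>2)) \<partial>lborel) = ennreal (G (insert k I) l u)"
    by (rule G_insert) (use assms in auto)
  moreover have "nnF (insert k I) l u = ennreal (G (insert k I) l u)"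
    by (rule nnF_G) (use assms in auto)
  ultimately show ?thesis by simp
qed

lemma cross_int:
  assumes R: "finite R" "j \<notin> R" and l: "\<And>k. 0 < l k" and st: "s \<le> t"
  shows "Nt (insert j R) l j s * nnF (insert j R) l t \<le> Nt (insert j R) l j t * nnF (insert j R) l s"
proof -
  define g where "g = G R l"
  define a where "a = pd (l j)"
  define lj where "lj = l j"
  have lj: "0 < lj" unfolding lj_def by (rule l)
  have [measurable]: "g \<in> borel_measurable borel" unfolding g_def using R l by (intro G_meas) auto
  have [measurable]: "a \<in> borel_measurable borel" unfolding a_def by simp
  have gnn: "0 \<le> g x" for x unfolding g_def by (rule G_nn)
  have ann: "0 \<le> a x" for x unfolding a_def by (rule pd_nn[OF l])
  have nn1: "0 \<le> a z * (z\<^sup>2 / lj) * g (u - z\<^sup>2)" for z u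
    by (rule mult_nonneg_nonneg[OF mult_nonneg_nonneg[OF ann[of z] divide_nonneg_pos[OF zero_le_power2[of z] lj]] gnn[of "u - z\<^sup>2"]])
  have nn2: "0 \<le> a z * g (u - z\<^sup>2)" for z u
    by (rule mult_nonneg_nonneg[OF ann[of z] gnn[of "u - z\<^sup>2"]])
  have glc: "lcf g" unfolding g_def using R l by (intro G_lc) auto
  have N: "Nt (insert j R) l j u = (\<integral>\<^sup>+ z. ennreal (a z * (z\<^sup>2 / lj) * g (u - z\<^sup>2)) \<partial>lborel)" for u
    unfolding a_def g_def lj_def using R l by (rule Nt_insert)
  have D: "nnF (insert j R) l u = (\<integral>\<^sup>+ z. ennreal (a z * g (u - z\<^sup>2)) \<partial>lborel)" for u
    unfolding a_def g_def using R l by (rule nnF_insert_G)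
  have "Nt (insert j R) l j s * nnF (insert j R) l t
      = (\<integral>\<^sup>+ z. (\<integral>\<^sup>+ w. ennreal ((a z * (z\<^sup>2 / lj) * g (s - z\<^sup>2)) * (a w * g (t - w\<^sup>2))) \<partial>lborel) \<partial>lborel)"
    unfolding N D by (rule prod_int) (simp_all only: nn1 nn2, simp_all)
  also have "\<dots> \<le> (\<integral>\<^sup>+ z. (\<integral>\<^sup>+ w. ennreal ((a z * (z\<^sup>2 / lj) * g (t - z\<^sup>2)) * (a w * g (s - w\<^sup>2))) \<partial>lborel) \<partial>lborel)"
  proof (rule sym_ineq)
    show "(\<lambda>p. a (fst p) * ((fst p)\<^sup>2 / lj) * g (s - (fst p)\<^sup>2) * (a (snd p) * g (t - (snd p)\<^sup>2)))
      \<in> borel_measurable (lborel \<Otimes>\<^sub>M lborel)" by measurable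
    show "(\<lambda>p. a (fst p) * ((fst p)\<^sup>2 / lj) * g (t - (fst p)\<^sup>2) * (a (snd p) * g (s - (snd p)\<^sup>2)))
      \<in> borel_measurable (lborel \<Otimes>\<^sub>M lborel)" by measurable
    show "0 \<le> a z * (z\<^sup>2 / lj) * g (s - z\<^sup>2) * (a w * g (t - w\<^sup>2))"
      "0 \<le> a z * (z\<^sup>2 / lj) * g (t - z\<^sup>2) * (a w * g (s - w\<^sup>2))" for z w
      using nn1 nn2 by (auto intro!: mult_nonneg_nonneg simp del: times_divide_eq_right times_divide_eq_left)
    fix z w
    have "a z * a w * (z\<^sup>2 / lj) * g (s - z\<^sup>2) * g (t - w\<^sup>2) + a w * a z * (w\<^sup>2 / lj) * g (s - w\<^sup>2) * g (t - z\<^sup>2)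
       \<le> a z * a w * (z\<^sup>2 / lj) * g (t - z\<^sup>2) * g (s - w\<^sup>2) + a w * a z * (w\<^sup>2 / lj) * g (t - w\<^sup>2) * g (s - z\<^sup>2)"
      by (rule cross_pointwise[OF glc gnn st ann ann lj])
    then show "a z * (z\<^sup>2 / lj) * g (s - z\<^sup>2) * (a w * g (t - w\<^sup>2)) + a w * (w\<^sup>2 / lj) * g (s - w\<^sup>2) * (a z * g (t - z\<^sup>2))
       \<le> a z * (z\<^sup>2 / lj) * g (t - z\<^sup>2) * (a w * g (s - w\<^sup>2)) + a w * (w\<^sup>2 / lj) * g (t - w\<^sup>2) * (a z * g (s - z\<^sup>2))"
      by (simp add: mult_ac)
  qed
  also have "\<dots> = Nt (insert j R) l j t * nnF (insert j R) l s"
    unfolding N D by (rule prod_int[symmetric]) (simp_all only: nn1 nn2, simp_all)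
  finally show ?thesis .
qed

lemma Nt_bound:
  assumes I: "finite I" "j \<in> I" and l: "\<And>k. 0 < l k"
  shows "Nt I l j s \<le> ennreal (\<bar>s\<bar> / l j) * nnF I l s"
proof -
  have "Nt I l j s \<le> (\<integral>\<^sup>+ x. ennreal (\<bar>s\<bar> / l j) * ennreal (Q I l s x) \<partial>PiM I (\<lambda>_. lborel))"
    unfolding Nt_def
  proof (intro nn_integral_mono)
    fix x
    have qn: "0 \<le> Q I l s x" using Q_nn l by blast
    have "Q I l s x * ((x j)\<^sup>2 / l j) \<le> \<bar>s\<bar> / l j * Q I l s x"
    proof (cases "(\<Sum>k\<in>I. (x k)\<^sup>2) < s")
      case True
      have "(x j)\<^sup>2 \<le> (\<Sum>k\<in>I. (x k)\<^sup>2)" using I by (intro member_le_sum) auto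
      then have "(x j)\<^sup>2 \<le> \<bar>s\<bar>" using True by linarith
      then have "(x j)\<^sup>2 / l j \<le> \<bar>s\<bar> / l j" using l[of j] by (simp add: divide_right_mono)
      then have "Q I l s x * ((x j)\<^sup>2 / l j) \<le> Q I l s x * (\<bar>s\<bar> / l j)"
        using qn by (rule mult_left_mono)
      then show ?thesis by (simp only: mult.commute)
    next
      case False
      then show ?thesis by (simp add: Q_def)
    qed
    then show "ennreal (Q I l s x * ((x j)\<^sup>2 / l j)) \<le> ennreal (\<bar>s\<bar> / l j) * ennreal (Q I l s x)"
      using l[of j] qn by (simp add: ennreal_mult[symmetric] ennreal_leI del: times_divide_eq_left)
  qed
  also have "\<dots> = ennreal (\<bar>s\<bar> / l j) * nnF I l s"
    unfolding nnF_def using I by (simp add: nn_integral_cmult)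
  finally show ?thesis .
qed

definition Rr :: "'i set \<Rightarrow> ('i \<Rightarrow> real) \<Rightarrow> 'i \<Rightarrow> real \<Rightarrow> real" where
  "Rr I l j s = enn2real (Nt I l j s) / G I l s"

lemma Nt_fin:
  assumes "finite I" "j \<in> I" "\<And>k. 0 < l k"
  shows "Nt I l j s = ennreal (enn2real (Nt I l j s))"
proof -
  have "Nt I l j s \<le> ennreal (\<bar>s\<bar> / l j) * nnF I l s" by (rule Nt_bound[OF assms])
  also have "\<dots> \<le> ennreal (\<bar>s\<bar> / l j) * 1" by (intro mult_left_mono nnF_le1) (use assms in auto)
  finally have "Nt I l j s < top" by (simp add: le_less_trans)
  then show ?thesis by simp
qed

lemma Rr_nn: "0 \<le> Rr I l j s"
  unfolding Rr_def by (simp add: G_nn)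

lemma Rr_id:
  assumes I: "finite I" "j \<in> I" and l: "\<And>k. 0 < l k"
  shows "ennreal (Rr I l j s) * nnF I l s = Nt I l j s"
proof (cases "G I l s = 0")
  case True
  then have F0: "nnF I l s = 0" using nnF_G[of I l, OF I(1) l] by simp
  have "Nt I l j s \<le> ennreal (\<bar>s\<bar> / l j) * nnF I l s" by (rule Nt_bound[OF I l])
  then have "Nt I l j s = 0" using F0 by simp
  then show ?thesis using F0 by simp
next
  case False
  then have Gp: "0 < G I l s" using G_nn[of I l s] by simp
  have "ennreal (Rr I l j s) * nnF I l s = ennreal (Rr I l j s * G I l s)"
    unfolding nnF_G[of I l, OF I(1) l] by (rule ennreal_mult[symmetric, OF Rr_nn G_nn])
  also have "Rr I l j s * G I l s = enn2real (Nt I l j s)" unfolding Rr_def using Gp by simp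
  also have "ennreal \<dots> = Nt I l j s" using Nt_fin[of I j l, OF I l] by simp
  finally show ?thesis .
qed

lemma Rr_mono:
  assumes I: "finite I" "j \<in> I" and l: "\<And>k. 0 < l k" and st: "s \<le> t"
  shows "Rr I l j s \<le> Rr I l j t"
proof (cases "G I l s = 0")
  case True
  then show ?thesis using Rr_nn[of I l j t] unfolding Rr_def by simp
next
  case False
  then have Gs: "0 < G I l s" using G_nn[of I l s] by simp
  have Gt: "0 < G I l t" using Gs G_mono[of I l s t, OF I(1) l st] by simp
  define R where "R = I - {j}"
  have IR: "I = insert j R" "finite R" "j \<notin> R" unfolding R_def using I by auto
  have "Nt I l j s * nnF I l t \<le> Nt I l j t * nnF I l s"
    unfolding IR(1) by (rule cross_int[OF IR(2,3) l st])
  then have "ennreal (enn2real (Nt I l j s)) * ennreal (G I l t) \<le> ennreal (enn2real (Nt I l j t)) * ennreal (G I l s)"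
    using Nt_fin[of I j l s, OF I l] Nt_fin[of I j l t, OF I l] nnF_G[of I l, OF I(1) l] by simp
  then have "enn2real (Nt I l j s) * G I l t \<le> enn2real (Nt I l j t) * G I l s"
  proof -
    assume a: "ennreal (enn2real (Nt I l j s)) * ennreal (G I l t) \<le> ennreal (enn2real (Nt I l j t)) * ennreal (G I l s)"
    have "ennreal (enn2real (Nt I l j s) * G I l t) \<le> ennreal (enn2real (Nt I l j t) * G I l s)"
      using a by (simp only: ennreal_mult[OF enn2real_nonneg G_nn])
    then show ?thesis by (subst (asm) ennreal_le_iff) (auto intro: mult_nonneg_nonneg G_nn)
  qed
  then show ?thesis unfolding Rr_def using Gs Gt by (simp add: divide_simps)
qed

lemma V_nth: "(\<Sum>b\<in>Basis. f b *\<^sub>R b :: real^'n) $ k = f (axis k 1)"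
proof -
  have ak: "(axis k 1 :: real^'n) \<in> Basis" by simp
  have "(\<Sum>b\<in>Basis. f b *\<^sub>R b :: real^'n) $ k = (\<Sum>b\<in>Basis. f b *\<^sub>R b :: real^'n) \<bullet> axis k 1"
    by (simp add: inner_axis)
  also have "\<dots> = (\<Sum>b\<in>Basis. f b * (b \<bullet> (axis k 1 :: real^'n)))"
    by (simp add: inner_sum_left)
  also have "\<dots> = (\<Sum>b\<in>Basis. if b = axis k 1 then f b else 0)"
    using ak by (intro sum.cong) (auto simp: inner_Basis)
  also have "\<dots> = f (axis k 1)" using ak by simp
  finally show ?thesis .
qed

lemma Basis_ax: "(Basis :: (real^'n) set) = range (\<lambda>k. axis k 1)"
  by (auto simp: Basis_vec_def)

lemma inj_ax: "inj (\<lambda>k::'n::finite. (axis k (1::real) :: real^'n))"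
  by (auto simp: inj_on_def axis_eq_axis)

lemma sum_Basis_ax: "(\<Sum>b\<in>(Basis :: (real^'n) set). h b) = (\<Sum>k\<in>UNIV. h (axis k 1))"
  unfolding Basis_ax by (subst sum.reindex[OF inj_ax]) simp

lemma prod_Basis_ax: "(\<Prod>b\<in>(Basis :: (real^'n) set). h b) = (\<Prod>k\<in>UNIV. h (axis k 1))"
  unfolding Basis_ax by (subst prod.reindex[OF inj_ax]) simp

lemma dens_V:
  "trunc_normal_dens lam rho (\<Sum>b\<in>Basis. f b *\<^sub>R b :: real^'n) = Q Basis (\<lambda>b. lam (axis_index b)) rho f"
proof -
  define v where "v = (\<Sum>b\<in>Basis. f b *\<^sub>R b :: real^'n)"
  have vk: "v $ k = f (axis k 1)" for k unfolding v_def by (rule V_nth)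
  have "v \<bullet> v = (\<Sum>b\<in>Basis. (f b)\<^sup>2)"
    unfolding sum_Basis_ax by (simp add: inner_vec_def vk power2_eq_square)
  moreover have "(\<Prod>n\<in>UNIV. inverse (sqrt (lam n)) * std_normal_density (inverse (sqrt (lam n)) * v $ n))
      = (\<Prod>b\<in>Basis. pd (lam (axis_index b)) (f b))"
    unfolding prod_Basis_ax by (simp add: vk pd_def)
  ultimately show ?thesis unfolding v_def[symmetric] trunc_normal_dens_def Q_def by simp
qed

lemma vec_nth_meas[measurable]: "(\<lambda>x::real^'n. x $ k) \<in> borel_measurable borel"
  by (intro borel_measurable_continuous_onI continuous_intros)

lemma split_lborel:
  fixes H :: "real^'n \<Rightarrow> ennreal" and a :: "real^'n" and B :: "(real^'n) set"
  assumes [measurable]: "H \<in> borel_measurable borel" and Bas: "Basis = insert a B" "a \<notin> B"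
  shows "(\<integral>\<^sup>+x. H x \<partial>lborel) = (\<integral>\<^sup>+ y. (\<integral>\<^sup>+ f. H (\<Sum>b\<in>Basis. (f(a := y)) b *\<^sub>R b) \<partial>PiM B (\<lambda>_. lborel)) \<partial>lborel)"
proof -
  have finB: "finite B" using Bas by (metis finite_Basis finite_insert)
  have Vm[measurable]: "(\<lambda>f. \<Sum>b\<in>Basis. f b *\<^sub>R b :: real^'n) \<in> borel_measurable (PiM Basis (\<lambda>_. lborel))"
    by measurable
  have "(\<integral>\<^sup>+x. H x \<partial>lborel) = (\<integral>\<^sup>+x. H x \<partial>distr (PiM Basis (\<lambda>_. lborel)) borel (\<lambda>f. \<Sum>b\<in>Basis. f b *\<^sub>R b :: real^'n))"
    by (subst lborel_eq[where 'a="real^'n"]) simp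
  also have "\<dots> = (\<integral>\<^sup>+f. H (\<Sum>b\<in>Basis. f b *\<^sub>R b) \<partial>PiM Basis (\<lambda>_. lborel))"
    by (rule nn_integral_distr) simp_all
  also have "\<dots> = (\<integral>\<^sup>+f. H (\<Sum>b\<in>Basis. f b *\<^sub>R b) \<partial>PiM (insert a B) (\<lambda>_. lborel))"
    using Bas by simp
  also have "\<dots> = (\<integral>\<^sup>+ y. (\<integral>\<^sup>+ f. H (\<Sum>b\<in>Basis. (f(a := y)) b *\<^sub>R b) \<partial>PiM B (\<lambda>_. lborel)) \<partial>lborel)"
  proof (rule PS.product_nn_integral_insert_rev)
    show "finite B" "a \<notin> B" by (fact finB, fact Bas(2))
    show "(\<lambda>f. H (\<Sum>b\<in>Basis. f b *\<^sub>R b)) \<in> borel_measurable (PiM (insert a B) (\<lambda>_. lborel))"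
      using Vm unfolding Bas(1) by measurable
  qed
  finally show ?thesis .
qed

theorem mainTheorem8:
  fixes M :: "'a measure" and X :: "'a \<Rightarrow> real ^ 'n::finite"
    and lam :: "'n \<Rightarrow> real" and rho c :: real and i j :: 'n
  assumes "prob_space M"
    and "i \<noteq> j"
    and "rho > 0"
    and "\<And>n. lam n > 0"
    and "c > 0"
    and "distributed M lborel X (\<lambda>x. ennreal (c * trunc_normal_dens lam rho x))"
  defines "Y \<equiv> (\<lambda>n \<omega>. (X \<omega> $ n)\<^sup>2 / lam n)"
  shows "\<exists>g :: real \<Rightarrow> real.
           (\<forall>a b. 0 < a \<and> a \<le> b \<and> b < rho / lam i \<longrightarrow> g b \<le> g a) \<and>
           (AE \<omega> in M. real_cond_exp M (vimage_algebra (space M) (Y i) borel) (Y j) \<omega> = g (Y i \<omega>))"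
proof -
  interpret P: prob_space M by fact
  note D = assms(6)
  have lam: "\<And>n. 0 < lam n" by fact
  have Xm[measurable]: "X \<in> borel_measurable M" using distributed_measurable[OF D] by simp
  have Ym[measurable]: "Y n \<in> borel_measurable M" for n unfolding Y_def by measurable
  have Ynn: "0 \<le> Y n \<omega>" for n \<omega> unfolding Y_def by (intro divide_nonneg_pos zero_le_power2 lam)
  define lb :: "real^'n \<Rightarrow> real" where "lb b = lam (axis_index b)" for b
  have lb: "\<And>b. 0 < lb b" unfolding lb_def using lam by simp
  define ai :: "real^'n" where "ai = axis i 1"
  define aj :: "real^'n" where "aj = axis j 1"
  define Bi where "Bi = (Basis :: (real^'n) set) - {ai}"
  have aiB: "ai \<in> Basis" unfolding ai_def by simp
  have finBi: "finite Bi" unfolding Bi_def by simp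
  have aiBi: "ai \<notin> Bi" unfolding Bi_def by simp
  have BasBi: "Basis = insert ai Bi" unfolding Bi_def using aiB by auto
  have ajBi: "aj \<in> Bi" unfolding Bi_def ai_def aj_def using assms(2) by (simp add: axis_eq_axis)
  have mNt: "(\<lambda>f. ennreal (Q Bi lb s f * ((f aj)\<^sup>2 / lb aj))) \<in> borel_measurable (PiM Bi (\<lambda>_. lborel))" for s
  proof -
    have [measurable]: "(\<lambda>f. f aj) \<in> borel_measurable (PiM Bi (\<lambda>_. lborel :: real measure))"
      using measurable_component_singleton[OF ajBi, of "\<lambda>_. lborel :: real measure"] by simp
    show ?thesis using finBi by measurable
  qed
  have lbi: "lb ai = lam i" "lb aj = lam j" unfolding lb_def ai_def aj_def by simp_all
  define R where "R s = Rr Bi lb aj s" for s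
  have Rmono: "R s \<le> R t" if "s \<le> t" for s t
    unfolding R_def using finBi ajBi lb that by (rule Rr_mono)
  have Rnn: "0 \<le> R s" for s unfolding R_def by (rule Rr_nn)
  have Rmeas[measurable]: "R \<in> borel_measurable borel"
    by (rule borel_measurable_mono) (auto simp: mono_def Rmono)
  define g where "g y = R (rho - lam i * y)" for y
  have gmeas[measurable]: "g \<in> borel_measurable borel" unfolding g_def[abs_def] by measurable
  have Rid: "ennreal (R s) * nnF Bi lb s = Nt Bi lb aj s" for s
    unfolding R_def using finBi ajBi lb by (rule Rr_id)
  define dens where "dens x = ennreal (c * trunc_normal_dens lam rho x)" for x
  have dens_meas[measurable]: "dens \<in> borel_measurable borel" using distributed_borel_measurable[OF D] unfolding dens_def[abs_def] by simp
  have Vupd: "trunc_normal_dens lam rho (\<Sum>b\<in>Basis. (f(ai := y)) b *\<^sub>R b) = pd (lam i) y * Q Bi lb (rho - y\<^sup>2) f" for f y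
  proof -
    have lbe: "(\<lambda>b. lam (axis_index b)) = lb" unfolding lb_def by simp
    have "trunc_normal_dens lam rho (\<Sum>b\<in>Basis. (f(ai := y)) b *\<^sub>R b) = Q Basis lb rho (f(ai := y))"
      by (simp only: dens_V lbe)
    also have "\<dots> = pd (lb ai) y * Q Bi lb (rho - y\<^sup>2) f"
      unfolding BasBi by (rule Q_insert[OF finBi aiBi])
    finally show ?thesis using lbi by simp
  qed
  have nthi: "(\<Sum>b\<in>Basis. (f(ai := y)) b *\<^sub>R b :: real^'n) $ i = y" for f y
    unfolding V_nth ai_def by simp
  have nthj: "(\<Sum>b\<in>Basis. (f(ai := y)) b *\<^sub>R b :: real^'n) $ j = f aj" for f y
    unfolding V_nth aj_def ai_def using assms(2) by (simp add: axis_eq_axis)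
  have key: "(\<integral>\<^sup>+x. dens x * ennreal (indicator S ((x$i)\<^sup>2 / lam i) * ((x$j)\<^sup>2 / lam j)) \<partial>lborel)
           = (\<integral>\<^sup>+x. dens x * ennreal (indicator S ((x$i)\<^sup>2 / lam i) * g ((x$i)\<^sup>2 / lam i)) \<partial>lborel)"
    if S[measurable]: "S \<in> sets borel" for S
  proof -
    have L: "(\<integral>\<^sup>+x. dens x * ennreal (indicator S ((x$i)\<^sup>2 / lam i) * ((x$j)\<^sup>2 / lam j)) \<partial>lborel)
      = (\<integral>\<^sup>+ y. ennreal (c * pd (lam i) y * indicator S (y\<^sup>2 / lam i)) * Nt Bi lb aj (rho - y\<^sup>2) \<partial>lborel)"
    proof -
      have "(\<integral>\<^sup>+x. dens x * ennreal (indicator S ((x$i)\<^sup>2 / lam i) * ((x$j)\<^sup>2 / lam j)) \<partial>lborel)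
        = (\<integral>\<^sup>+ y. (\<integral>\<^sup>+ f. ennreal (c * (pd (lam i) y * Q Bi lb (rho - y\<^sup>2) f)) * ennreal (indicator S (y\<^sup>2 / lam i) * ((f aj)\<^sup>2 / lam j)) \<partial>PiM Bi (\<lambda>_. lborel)) \<partial>lborel)"
      proof -
        have m1: "(\<lambda>x. dens x * ennreal (indicator S ((x$i)\<^sup>2 / lam i) * ((x$j)\<^sup>2 / lam j))) \<in> borel_measurable borel"
          by measurable
        show ?thesis by (subst split_lborel[OF m1 BasBi aiBi]) (simp only: nthi nthj dens_def Vupd)
      qed
      also have "\<dots> = (\<integral>\<^sup>+ y. (\<integral>\<^sup>+ f. ennreal (c * pd (lam i) y * indicator S (y\<^sup>2 / lam i)) * ennreal (Q Bi lb (rho - y\<^sup>2) f * ((f aj)\<^sup>2 / lb aj)) \<partial>PiM Bi (\<lambda>_. lborel)) \<partial>lborel)"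
      proof (intro nn_integral_cong)
        fix y f
        have q: "0 \<le> Q Bi lb (rho - y\<^sup>2) f" using Q_nn lb by blast
        have p: "0 \<le> pd (lam i) y" using pd_nn lam by blast
        show "ennreal (c * (pd (lam i) y * Q Bi lb (rho - y\<^sup>2) f)) * ennreal (indicator S (y\<^sup>2 / lam i) * ((f aj)\<^sup>2 / lam j))
          = ennreal (c * pd (lam i) y * indicator S (y\<^sup>2 / lam i)) * ennreal (Q Bi lb (rho - y\<^sup>2) f * ((f aj)\<^sup>2 / lb aj))"
          unfolding lbi using q p assms(5) lam[of j]
          by (simp add: ennreal_mult'[symmetric] mult_ac)
      qed
      also have "\<dots> = (\<integral>\<^sup>+ y. ennreal (c * pd (lam i) y * indicator S (y\<^sup>2 / lam i)) * Nt Bi lb aj (rho - y\<^sup>2) \<partial>lborel)"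
        unfolding Nt_def by (intro nn_integral_cong) (rule nn_integral_cmult[OF mNt])
      finally show ?thesis .
    qed
    have Rt: "(\<integral>\<^sup>+x. dens x * ennreal (indicator S ((x$i)\<^sup>2 / lam i) * g ((x$i)\<^sup>2 / lam i)) \<partial>lborel)
      = (\<integral>\<^sup>+ y. ennreal (c * pd (lam i) y * indicator S (y\<^sup>2 / lam i)) * (ennreal (R (rho - y\<^sup>2)) * nnF Bi lb (rho - y\<^sup>2)) \<partial>lborel)"
    proof -
      have "(\<integral>\<^sup>+x. dens x * ennreal (indicator S ((x$i)\<^sup>2 / lam i) * g ((x$i)\<^sup>2 / lam i)) \<partial>lborel)
        = (\<integral>\<^sup>+ y. (\<integral>\<^sup>+ f. ennreal (c * (pd (lam i) y * Q Bi lb (rho - y\<^sup>2) f)) * ennreal (indicator S (y\<^sup>2 / lam i) * g (y\<^sup>2 / lam i)) \<partial>PiM Bi (\<lambda>_. lborel)) \<partial>lborel)"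
      proof -
        have m1: "(\<lambda>x. dens x * ennreal (indicator S ((x$i)\<^sup>2 / lam i) * g ((x$i)\<^sup>2 / lam i))) \<in> borel_measurable borel"
          by measurable
        show ?thesis by (subst split_lborel[OF m1 BasBi aiBi]) (simp only: nthi nthj dens_def Vupd)
      qed
      also have "\<dots> = (\<integral>\<^sup>+ y. (\<integral>\<^sup>+ f. ennreal (c * pd (lam i) y * indicator S (y\<^sup>2 / lam i)) * (ennreal (R (rho - y\<^sup>2)) * ennreal (Q Bi lb (rho - y\<^sup>2) f)) \<partial>PiM Bi (\<lambda>_. lborel)) \<partial>lborel)"
      proof (intro nn_integral_cong)
        fix y f
        have q: "0 \<le> Q Bi lb (rho - y\<^sup>2) f" using Q_nn lb by blast
        have p: "0 \<le> pd (lam i) y" using pd_nn lam by blast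
        have gy: "g (y\<^sup>2 / lam i) = R (rho - y\<^sup>2)" unfolding g_def using lam[of i] by simp
        show "ennreal (c * (pd (lam i) y * Q Bi lb (rho - y\<^sup>2) f)) * ennreal (indicator S (y\<^sup>2 / lam i) * g (y\<^sup>2 / lam i))
          = ennreal (c * pd (lam i) y * indicator S (y\<^sup>2 / lam i)) * (ennreal (R (rho - y\<^sup>2)) * ennreal (Q Bi lb (rho - y\<^sup>2) f))"
          unfolding gy using q p assms(5) Rnn[of "rho - y\<^sup>2"]
          by (simp add: ennreal_mult'[symmetric] mult_ac)
      qed
      also have "\<dots> = (\<integral>\<^sup>+ y. ennreal (c * pd (lam i) y * indicator S (y\<^sup>2 / lam i)) * (ennreal (R (rho - y\<^sup>2)) * nnF Bi lb (rho - y\<^sup>2)) \<partial>lborel)"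
        unfolding nnF_def using finBi by (intro nn_integral_cong) (simp add: nn_integral_cmult mult.assoc[symmetric])
      finally show ?thesis .
    qed
    show ?thesis unfolding L Rt Rid ..
  qed
  have dens1: "(\<integral>\<^sup>+x. dens x \<partial>lborel) = 1"
  proof -
    have "emeasure M (X -` UNIV \<inter> space M) = (\<integral>\<^sup>+x. dens x * indicator UNIV x \<partial>lborel)"
      unfolding dens_def by (rule distributed_emeasure[OF D]) simp
    then show ?thesis by (simp add: P.emeasure_space_1)
  qed
  have toX: "(\<integral>\<^sup>+\<omega>. H (X \<omega>) \<partial>M) = (\<integral>\<^sup>+x. dens x * H x \<partial>lborel)" if [measurable]: "H \<in> borel_measurable borel" for H
    unfolding dens_def by (rule distributed_nn_integral[OF D, symmetric]) simp
  have intYj: "integrable M (Y j)"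
  proof (rule integrableI_nonneg)
    show "Y j \<in> borel_measurable M" by simp
    show "AE \<omega> in M. 0 \<le> Y j \<omega>" unfolding Y_def by (intro AE_I2 divide_nonneg_pos zero_le_power2 lam)
    have "(\<integral>\<^sup>+\<omega>. ennreal (Y j \<omega>) \<partial>M) = (\<integral>\<^sup>+x. dens x * ennreal ((x$j)\<^sup>2 / lam j) \<partial>lborel)"
      unfolding Y_def by (rule toX) simp
    also have "\<dots> \<le> (\<integral>\<^sup>+x. ennreal (rho / lam j) * dens x \<partial>lborel)"
    proof (rule nn_integral_mono)
      fix x :: "real^'n"
      show "dens x * ennreal ((x$j)\<^sup>2 / lam j) \<le> ennreal (rho / lam j) * dens x"
      proof (cases "x \<bullet> x < rho")
        case True
        have "(x$j)\<^sup>2 \<le> (\<Sum>k\<in>UNIV. x$k * x$k)"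
        proof -
          have "x$j * x$j \<le> (\<Sum>k\<in>UNIV. x$k * x$k)" by (rule member_le_sum) auto
          then show ?thesis by (simp add: power2_eq_square)
        qed
        also have "\<dots> = x \<bullet> x" by (simp add: inner_vec_def)
        finally have "(x$j)\<^sup>2 / lam j \<le> rho / lam j" using True lam[of j] by (simp add: divide_right_mono)
        then show ?thesis by (simp add: mult.commute mult_left_mono ennreal_leI)
      next
        case False
        then show ?thesis by (simp add: dens_def trunc_normal_dens_def)
      qed
    qed
    also have "\<dots> = ennreal (rho / lam j)" by (simp add: nn_integral_cmult dens1)
    finally show "(\<integral>\<^sup>+\<omega>. ennreal (Y j \<omega>) \<partial>M) < \<infinity>" by (simp add: le_less_trans)
  qed
  define F where "F = vimage_algebra (space M) (Y i) borel"
  have YiF[measurable]: "Y i \<in> measurable F borel" unfolding F_def by (rule measurable_vimage_algebra1) simp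
  have subalg: "subalgebra M F" unfolding subalgebra_def F_def
    using sets_image_in_sets[OF refl Ym[of i]] by simp
  interpret FS: finite_measure_subalgebra M F by standard (fact subalg)
  have gYm: "(\<lambda>\<omega>. g (Y i \<omega>)) \<in> borel_measurable F" by measurable
  have gYm2[measurable]: "(\<lambda>\<omega>. g (Y i \<omega>)) \<in> borel_measurable M" by measurable
  have intg: "integrable M (\<lambda>\<omega>. g (Y i \<omega>))"
  proof (rule P.integrable_const_bound[where B = "R rho"])
    show "AE \<omega> in M. norm (g (Y i \<omega>)) \<le> R rho"
    proof (intro AE_I2)
      fix \<omega>
      have "0 \<le> Y i \<omega>" by (rule Ynn)
      then have "rho - lam i * Y i \<omega> \<le> rho" using lam[of i] by simp
      then show "norm (g (Y i \<omega>)) \<le> R rho" unfolding g_def using Rmono Rnn by simp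
    qed
  qed simp
  have AE: "AE \<omega> in M. real_cond_exp M F (Y j) \<omega> = g (Y i \<omega>)"
  proof (rule FS.real_cond_exp_charact)
    fix A assume A: "A \<in> sets F"
    then obtain S where S[measurable]: "S \<in> sets borel" and AS: "A = Y i -` S \<inter> space M"
      unfolding F_def by (subst (asm) sets_vimage_algebra2) auto
    have Am[measurable]: "A \<in> sets M" unfolding AS by measurable
    have e: "(\<integral>\<omega>\<in>A. h \<omega> \<partial>M) = enn2real (\<integral>\<^sup>+\<omega>. dens \<omega> * ennreal (indicator S ((\<omega>$i)\<^sup>2 / lam i) * h' \<omega>) \<partial>lborel)"
      if [measurable]: "h \<in> borel_measurable M" "h' \<in> borel_measurable borel"
        and nn: "\<And>\<omega>. 0 \<le> h \<omega>" and hh': "\<And>\<omega>. h \<omega> = h' (X \<omega>)" for h h'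
    proof -
      have "(\<integral>\<omega>\<in>A. h \<omega> \<partial>M) = enn2real (\<integral>\<^sup>+\<omega>. ennreal (indicator A \<omega> * h \<omega>) \<partial>M)"
        unfolding set_lebesgue_integral_def using nn by (subst integral_eq_nn_integral) auto
      also have "(\<integral>\<^sup>+\<omega>. ennreal (indicator A \<omega> * h \<omega>) \<partial>M)
          = (\<integral>\<^sup>+\<omega>. ennreal (indicator S (((X \<omega>)$i)\<^sup>2 / lam i) * h' (X \<omega>)) \<partial>M)"
        unfolding AS Y_def hh' by (intro nn_integral_cong) (simp add: indicator_def)
      also have "\<dots> = (\<integral>\<^sup>+\<omega>. dens \<omega> * ennreal (indicator S ((\<omega>$i)\<^sup>2 / lam i) * h' \<omega>) \<partial>lborel)"
        by (rule toX) simp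
      finally show ?thesis .
    qed
    have "(\<integral>\<omega>\<in>A. Y j \<omega> \<partial>M) = enn2real (\<integral>\<^sup>+\<omega>. dens \<omega> * ennreal (indicator S ((\<omega>$i)\<^sup>2 / lam i) * ((\<omega>$j)\<^sup>2 / lam j)) \<partial>lborel)"
      by (rule e) (auto simp: Y_def intro: Ynn[unfolded Y_def])
    also have "\<dots> = enn2real (\<integral>\<^sup>+\<omega>. dens \<omega> * ennreal (indicator S ((\<omega>$i)\<^sup>2 / lam i) * g ((\<omega>$i)\<^sup>2 / lam i)) \<partial>lborel)"
      using key[OF S] by simp
    also have "\<dots> = (\<integral>\<omega>\<in>A. g (Y i \<omega>) \<partial>M)"
      by (rule e[symmetric]) (auto simp: Y_def g_def Rnn)
    finally show "(\<integral>\<omega>\<in>A. Y j \<omega> \<partial>M) = (\<integral>\<omega>\<in>A. g (Y i \<omega>) \<partial>M)" .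
  qed (fact intYj, fact intg, fact gYm)
  show ?thesis
  proof (intro exI conjI allI impI)
    fix a b :: real assume ab: "0 < a \<and> a \<le> b \<and> b < rho / lam i"
    then have "rho - lam i * b \<le> rho - lam i * a" using lam[of i] by (simp add: mult_left_mono)
    then show "g b \<le> g a" unfolding g_def by (rule Rmono)
  next
    show "AE \<omega> in M. real_cond_exp M (vimage_algebra (space M) (Y i) borel) (Y j) \<omega> = g (Y i \<omega>)"
      using AE unfolding F_def .
  qed
qed

end
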